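(* Let $k$ be a field and let $M$ be the $\mathrm{FI}^2$-module with $M_{a,b}=0$ for $(a,b)\in\{(0,0),(1,0),(0,1)\}$ and $M_{a,b}=k$ otherwise, in which every morphism induces the identity $k\to k$ or the zero map out of $0$. Then $M$ is indecomposable, and $M$ is not isomorphic to a direct sum of external tensor products $V\boxtimes W$ of $\mathrm{FI}$-modules $V,W$.
   Context: $\mathrm{FI}^2$ has objects pairs $(a,b)\in\mathbb{N}^2$ and morphisms pairs of injections $[a]\hookrightarrow[a']$, $[b]\hookrightarrow[b']$. An $\mathrm{FI}^2$-module is a functor to $k$-vector spaces. For $\mathrm{FI}$-modules $V,W$, $(V\boxtimes W)_{a,b}=V_a\otimes W_b$. *)

theory Defs
  imports Main
begin

text \<open>Vector spaces over a field 'k are modelled as subspaces of a function space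
  'x => 'k with pointwise operations (every k-vector space is isomorphic to one of
  these, and all ambient types are universally quantified in the main theorem).\<close>

definition fzero :: "'x \<Rightarrow> 'k::field" where
  "fzero = (\<lambda>_. 0)"

definition subspace_fn :: "('x \<Rightarrow> 'k::field) set \<Rightarrow> bool" where
  "subspace_fn S \<longleftrightarrow> fzero \<in> S \<and> (\<forall>u\<in>S. \<forall>v\<in>S. (\<lambda>p. u p + v p) \<in> S)
     \<and> (\<forall>c. \<forall>v\<in>S. (\<lambda>p. c * v p) \<in> S)"

definition linear_on :: "('x \<Rightarrow> 'k::field) set \<Rightarrow> ('y \<Rightarrow> 'k) set
    \<Rightarrow> (('x \<Rightarrow> 'k) \<Rightarrow> ('y \<Rightarrow> 'k)) \<Rightarrow> bool" where
  "linear_on S T h \<longleftrightarrow> (\<forall>v\<in>S. h v \<in> T)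
     \<and> (\<forall>u\<in>S. \<forall>v\<in>S. h (\<lambda>p. u p + v p) = (\<lambda>q. h u q + h v q))
     \<and> (\<forall>c. \<forall>v\<in>S. h (\<lambda>p. c * v p) = (\<lambda>q. c * h v q))"

text \<open>Morphisms of FI: injections [a] -> [a'], represented by functions on nat,
  only their values on {..<a} being relevant.\<close>

definition fi_mor :: "nat \<Rightarrow> nat \<Rightarrow> (nat \<Rightarrow> nat) \<Rightarrow> bool" where
  "fi_mor a a' f \<longleftrightarrow> inj_on f {..<a} \<and> f ` {..<a} \<subseteq> {..<a'}"

definition FI_module :: "(nat \<Rightarrow> ('x \<Rightarrow> 'k::field) set)
    \<Rightarrow> (nat \<Rightarrow> nat \<Rightarrow> (nat \<Rightarrow> nat) \<Rightarrow> ('x \<Rightarrow> 'k) \<Rightarrow> ('x \<Rightarrow> 'k)) \<Rightarrow> bool" where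
  "FI_module V act \<longleftrightarrow>
     (\<forall>n. subspace_fn (V n))
   \<and> (\<forall>a a' f. fi_mor a a' f \<longrightarrow> linear_on (V a) (V a') (act a a' f))
   \<and> (\<forall>a f v. fi_mor a a f \<and> (\<forall>j<a. f j = j) \<and> v \<in> V a \<longrightarrow> act a a f v = v)
   \<and> (\<forall>a a' a'' f g v. fi_mor a a' f \<and> fi_mor a' a'' g \<and> v \<in> V a
        \<longrightarrow> act a a'' (g \<circ> f) v = act a' a'' g (act a a' f v))
   \<and> (\<forall>a a' f f' v. fi_mor a a' f \<and> (\<forall>j<a. f j = f' j) \<and> v \<in> V a
        \<longrightarrow> act a a' f v = act a a' f' v)"

definition FI2_module :: "(nat \<Rightarrow> nat \<Rightarrow> ('x \<Rightarrow> 'k::field) set)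
    \<Rightarrow> (nat \<Rightarrow> nat \<Rightarrow> nat \<Rightarrow> nat \<Rightarrow> (nat \<Rightarrow> nat) \<Rightarrow> (nat \<Rightarrow> nat) \<Rightarrow> ('x \<Rightarrow> 'k) \<Rightarrow> ('x \<Rightarrow> 'k))
    \<Rightarrow> bool" where
  "FI2_module M act \<longleftrightarrow>
     (\<forall>a b. subspace_fn (M a b))
   \<and> (\<forall>a b a' b' f g. fi_mor a a' f \<and> fi_mor b b' g
        \<longrightarrow> linear_on (M a b) (M a' b') (act a b a' b' f g))
   \<and> (\<forall>a b f g v. fi_mor a a f \<and> fi_mor b b g \<and> (\<forall>j<a. f j = j) \<and> (\<forall>j<b. g j = j)
        \<and> v \<in> M a b \<longrightarrow> act a b a b f g v = v)
   \<and> (\<forall>a b a' b' a'' b'' f g f' g' v. fi_mor a a' f \<and> fi_mor b b' g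
        \<and> fi_mor a' a'' f' \<and> fi_mor b' b'' g' \<and> v \<in> M a b
        \<longrightarrow> act a b a'' b'' (f' \<circ> f) (g' \<circ> g) v
            = act a' b' a'' b'' f' g' (act a b a' b' f g v))
   \<and> (\<forall>a b a' b' f g f1 g1 v. fi_mor a a' f \<and> fi_mor b b' g
        \<and> (\<forall>j<a. f j = f1 j) \<and> (\<forall>j<b. g j = g1 j) \<and> v \<in> M a b
        \<longrightarrow> act a b a' b' f g v = act a b a' b' f1 g1 v)"

definition FI2_submodule :: "(nat \<Rightarrow> nat \<Rightarrow> ('x \<Rightarrow> 'k::field) set)
    \<Rightarrow> (nat \<Rightarrow> nat \<Rightarrow> nat \<Rightarrow> nat \<Rightarrow> (nat \<Rightarrow> nat) \<Rightarrow> (nat \<Rightarrow> nat) \<Rightarrow> ('x \<Rightarrow> 'k) \<Rightarrow> ('x \<Rightarrow> 'k))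
    \<Rightarrow> (nat \<Rightarrow> nat \<Rightarrow> ('x \<Rightarrow> 'k) set) \<Rightarrow> bool" where
  "FI2_submodule M act N \<longleftrightarrow>
     (\<forall>a b. subspace_fn (N a b) \<and> N a b \<subseteq> M a b)
   \<and> (\<forall>a b a' b' f g v. fi_mor a a' f \<and> fi_mor b b' g \<and> v \<in> N a b
        \<longrightarrow> act a b a' b' f g v \<in> N a' b')"

definition nonzero_sp :: "(nat \<Rightarrow> nat \<Rightarrow> ('x \<Rightarrow> 'k::field) set) \<Rightarrow> bool" where
  "nonzero_sp N \<longleftrightarrow> (\<exists>a b. N a b \<noteq> {fzero})"

definition FI2_indecomposable :: "(nat \<Rightarrow> nat \<Rightarrow> ('x \<Rightarrow> 'k::field) set)
    \<Rightarrow> (nat \<Rightarrow> nat \<Rightarrow> nat \<Rightarrow> nat \<Rightarrow> (nat \<Rightarrow> nat) \<Rightarrow> (nat \<Rightarrow> nat) \<Rightarrow> ('x \<Rightarrow> 'k) \<Rightarrow> ('x \<Rightarrow> 'k))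
    \<Rightarrow> bool" where
  "FI2_indecomposable M act \<longleftrightarrow> FI2_module M act \<and> nonzero_sp M \<and>
     \<not> (\<exists>N1 N2. FI2_submodule M act N1 \<and> FI2_submodule M act N2
          \<and> nonzero_sp N1 \<and> nonzero_sp N2
          \<and> (\<forall>a b. N1 a b \<inter> N2 a b = {fzero}
               \<and> M a b = {(\<lambda>p. x p + y p) | x y. x \<in> N1 a b \<and> y \<in> N2 a b}))"

text \<open>Tensor products, realized concretely: v \<otimes> w as the function (p,q) -> v p * w q;
  V \<otimes> W is the span of these (k^X \<otimes> k^Y embeds into k^(X \<times> Y)).\<close>

definition span_fn :: "('x \<Rightarrow> 'k::field) set \<Rightarrow> ('x \<Rightarrow> 'k) set" where
  "span_fn G = {u. \<exists>F c. finite F \<and> F \<subseteq> G \<and> u = (\<lambda>p. \<Sum>g\<in>F. c g * g p)}"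

definition tens :: "('x \<Rightarrow> 'k::field) \<Rightarrow> ('y \<Rightarrow> 'k) \<Rightarrow> ('x \<times> 'y \<Rightarrow> 'k)" where
  "tens v w = (\<lambda>(p, q). v p * w q)"

definition tensor_sp :: "('x \<Rightarrow> 'k::field) set \<Rightarrow> ('y \<Rightarrow> 'k) set \<Rightarrow> ('x \<times> 'y \<Rightarrow> 'k) set" where
  "tensor_sp V W = span_fn {tens v w | v w. v \<in> V \<and> w \<in> W}"

definition dsum_sp :: "'i set \<Rightarrow> ('i \<Rightarrow> ('r \<Rightarrow> 'k::field) set) \<Rightarrow> ('i \<times> 'r \<Rightarrow> 'k) set" where
  "dsum_sp I T = {F. finite {i. \<exists>r. F (i, r) \<noteq> 0}
       \<and> (\<forall>i. (\<lambda>r. F (i, r)) \<in> (if i \<in> I then T i else {fzero}))}"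

definition dsum_inj :: "'i \<Rightarrow> ('r \<Rightarrow> 'k::field) \<Rightarrow> ('i \<times> 'r \<Rightarrow> 'k)" where
  "dsum_inj i u = (\<lambda>(j, r). if j = i then u r else 0)"

text \<open>Naturality is
  required on the spanning pure tensors (the action of (f,g) on V \<boxtimes> W is the linear
  extension of v \<otimes> w -> (V f v) \<otimes> (W g w)).\<close>

definition FI2_iso_dsum_boxtimes ::
  "(nat \<Rightarrow> nat \<Rightarrow> ('z \<Rightarrow> 'k::field) set)
   \<Rightarrow> (nat \<Rightarrow> nat \<Rightarrow> nat \<Rightarrow> nat \<Rightarrow> (nat \<Rightarrow> nat) \<Rightarrow> (nat \<Rightarrow> nat) \<Rightarrow> ('z \<Rightarrow> 'k) \<Rightarrow> ('z \<Rightarrow> 'k))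
   \<Rightarrow> 'i set
   \<Rightarrow> ('i \<Rightarrow> nat \<Rightarrow> ('x \<Rightarrow> 'k) set)
   \<Rightarrow> ('i \<Rightarrow> nat \<Rightarrow> nat \<Rightarrow> (nat \<Rightarrow> nat) \<Rightarrow> ('x \<Rightarrow> 'k) \<Rightarrow> ('x \<Rightarrow> 'k))
   \<Rightarrow> ('i \<Rightarrow> nat \<Rightarrow> ('y \<Rightarrow> 'k) set)
   \<Rightarrow> ('i \<Rightarrow> nat \<Rightarrow> nat \<Rightarrow> (nat \<Rightarrow> nat) \<Rightarrow> ('y \<Rightarrow> 'k) \<Rightarrow> ('y \<Rightarrow> 'k))
   \<Rightarrow> bool" where
  "FI2_iso_dsum_boxtimes M act I V actV W actW \<longleftrightarrow>
    (\<exists>psi :: nat \<Rightarrow> nat \<Rightarrow> ('i \<times> ('x \<times> 'y) \<Rightarrow> 'k) \<Rightarrow> ('z \<Rightarrow> 'k).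
       (\<forall>a b. linear_on (dsum_sp I (\<lambda>i. tensor_sp (V i a) (W i b))) (M a b) (psi a b)
          \<and> bij_betw (psi a b) (dsum_sp I (\<lambda>i. tensor_sp (V i a) (W i b))) (M a b))
     \<and> (\<forall>a b a' b' f g i v w. fi_mor a a' f \<and> fi_mor b b' g \<and> i \<in> I
          \<and> v \<in> V i a \<and> w \<in> W i b \<longrightarrow>
          act a b a' b' f g (psi a b (dsum_inj i (tens v w)))
          = psi a' b' (dsum_inj i (tens (actV i a a' f v) (actW i b b' g w)))))"

text \<open>The module M of the theorem, with values in unit => 'k (a copy of k).\<close>

definition M7_sp :: "nat \<Rightarrow> nat \<Rightarrow> (unit \<Rightarrow> 'k::field) set" where
  "M7_sp a b = (if (a, b) \<in> {(0, 0), (1, 0), (0, 1)} then {fzero} else UNIV)"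

definition M7_act :: "nat \<Rightarrow> nat \<Rightarrow> nat \<Rightarrow> nat \<Rightarrow> (nat \<Rightarrow> nat) \<Rightarrow> (nat \<Rightarrow> nat)
    \<Rightarrow> (unit \<Rightarrow> 'k::field) \<Rightarrow> (unit \<Rightarrow> 'k)" where
  "M7_act a b a' b' f g x = x"

end

theory Submission
  imports Defs
begin


lemma fi_mor_le: "fi_mor a a' f \<Longrightarrow> a \<le> a'"
  unfolding fi_mor_def using card_inj_on_le[of f "{..<a}" "{..<a'}"] by simp

lemma subspace_zero: "subspace_fn {fzero}"
  unfolding subspace_fn_def fzero_def by auto

lemma subspace_UNIV: "subspace_fn UNIV"
  unfolding subspace_fn_def by auto

lemma M7_sub: "subspace_fn (M7_sp a b)"
  unfolding M7_sp_def using subspace_zero subspace_UNIV by auto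

lemma M7_mono: "fi_mor a a' f \<Longrightarrow> fi_mor b b' g \<Longrightarrow> v \<in> M7_sp a b \<Longrightarrow> v \<in> M7_sp a' b'"
  using fi_mor_le[of a a' f] fi_mor_le[of b b' g]
  unfolding M7_sp_def by (auto split: if_splits)

lemma M7_module: "FI2_module (M7_sp :: nat \<Rightarrow> nat \<Rightarrow> (unit \<Rightarrow> 'k::field) set) M7_act"
  unfolding FI2_module_def
  using M7_sub M7_mono by (auto simp: linear_on_def M7_act_def)

lemma unit_nz: "(v :: unit \<Rightarrow> 'k::field) \<noteq> fzero \<Longrightarrow> v () \<noteq> 0"
  unfolding fzero_def by (metis (full_types) ext old.unit.exhaust)

lemma fi_id: "fi_mor a (a + c) id"
  unfolding fi_mor_def by auto

lemma fi_id2: "fi_mor a (c + a) id"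
  unfolding fi_mor_def by auto

lemma M7_indec: "FI2_indecomposable (M7_sp :: nat \<Rightarrow> nat \<Rightarrow> (unit \<Rightarrow> 'k::field) set) M7_act"
  unfolding FI2_indecomposable_def
proof (intro conjI notI)
  show "FI2_module (M7_sp :: nat \<Rightarrow> nat \<Rightarrow> (unit \<Rightarrow> 'k::field) set) M7_act" by (rule M7_module)
  have "(\<lambda>_. 1) \<in> (M7_sp 1 1 :: (unit \<Rightarrow> 'k) set)" "(\<lambda>_::unit. 1::'k) \<noteq> fzero"
    by (auto simp: M7_sp_def fzero_def fun_eq_iff)
  then show "nonzero_sp (M7_sp :: nat \<Rightarrow> nat \<Rightarrow> (unit \<Rightarrow> 'k::field) set)"
    unfolding nonzero_sp_def by blast
next
  assume "\<exists>N1 N2. FI2_submodule (M7_sp :: nat \<Rightarrow> nat \<Rightarrow> (unit \<Rightarrow> 'k::field) set) M7_act N1 \<and> FI2_submodule M7_sp M7_act N2 \<and>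
        nonzero_sp N1 \<and> nonzero_sp N2 \<and>
        (\<forall>a b. N1 a b \<inter> N2 a b = {fzero} \<and> M7_sp a b = {(\<lambda>p. x p + y p) |x y. x \<in> N1 a b \<and> y \<in> N2 a b})"
  then obtain N1 N2 where S1: "FI2_submodule (M7_sp :: nat \<Rightarrow> nat \<Rightarrow> (unit \<Rightarrow> 'k::field) set) M7_act N1"
    and S2: "FI2_submodule (M7_sp :: nat \<Rightarrow> nat \<Rightarrow> (unit \<Rightarrow> 'k::field) set) M7_act N2"
    and n1: "nonzero_sp N1" and n2: "nonzero_sp N2" and dis: "\<And>a b. N1 a b \<inter> N2 a b = {fzero}"
    by blast
  obtain a1 b1 where "N1 a1 b1 \<noteq> {fzero}" using n1 unfolding nonzero_sp_def by blast
  moreover have "fzero \<in> N1 a1 b1" using S1 unfolding FI2_submodule_def subspace_fn_def by blast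
  ultimately obtain v1 where v1: "v1 \<in> N1 a1 b1" "v1 \<noteq> fzero" by blast
  obtain a2 b2 where "N2 a2 b2 \<noteq> {fzero}" using n2 unfolding nonzero_sp_def by blast
  moreover have "fzero \<in> N2 a2 b2" using S2 unfolding FI2_submodule_def subspace_fn_def by blast
  ultimately obtain v2 where v2: "v2 \<in> N2 a2 b2" "v2 \<noteq> fzero" by blast
  have w1: "v1 \<in> N1 (a1 + a2) (b1 + b2)"
    using S1 v1(1) fi_id[of a1 a2] fi_id[of b1 b2] unfolding FI2_submodule_def M7_act_def by blast
  have w2: "v2 \<in> N2 (a1 + a2) (b1 + b2)"
    using S2 v2(1) fi_id2[of a2 a1] fi_id2[of b2 b1] unfolding FI2_submodule_def M7_act_def by blast
  define c where "c = v2 () / v1 ()"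
  have "v2 = (\<lambda>p. c * v1 p)"
    using unit_nz[OF v1(2)] unfolding c_def by (auto simp: fun_eq_iff)
  moreover have "(\<lambda>p. c * v1 p) \<in> N1 (a1 + a2) (b1 + b2)"
    using S1 w1 unfolding FI2_submodule_def subspace_fn_def by blast
  ultimately have "v2 \<in> N1 (a1 + a2) (b1 + b2) \<inter> N2 (a1 + a2) (b1 + b2)" using w2 by simp
  then show False using dis v2(2) by blast
qed



lemma span_zero: "fzero \<in> span_fn G"
  unfolding span_fn_def fzero_def by (rule CollectI, rule exI[of _ "{}"]) auto

lemma span_add:
  assumes "u \<in> span_fn G" "v \<in> span_fn G"
  shows "(\<lambda>p. u p + v p) \<in> span_fn G"
proof -
  obtain F1 c1 where 1: "finite F1" "F1 \<subseteq> G" "u = (\<lambda>p. \<Sum>g\<in>F1. c1 g * g p)"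
    using assms(1) unfolding span_fn_def by blast
  obtain F2 c2 where 2: "finite F2" "F2 \<subseteq> G" "v = (\<lambda>p. \<Sum>g\<in>F2. c2 g * g p)"
    using assms(2) unfolding span_fn_def by blast
  define c where "c g = (if g \<in> F1 then c1 g else 0) + (if g \<in> F2 then c2 g else 0)" for g
  have fin: "finite (F1 \<union> F2)" using 1 2 by simp
  have e1: "(\<Sum>g\<in>F1. c1 g * g p) = (\<Sum>g\<in>F1 \<union> F2. (if g \<in> F1 then c1 g else 0) * g p)" for p
  proof -
    have "(\<Sum>g\<in>F1. c1 g * g p) = (\<Sum>g\<in>F1 \<union> F2. if g \<in> F1 then c1 g * g p else 0)"
      using sum.inter_restrict[OF fin, of "\<lambda>g. c1 g * g p" F1] by (simp add: Int_absorb2)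
    also have "\<dots> = (\<Sum>g\<in>F1 \<union> F2. (if g \<in> F1 then c1 g else 0) * g p)"
      by (rule sum.cong) auto
    finally show ?thesis .
  qed
  have e2: "(\<Sum>g\<in>F2. c2 g * g p) = (\<Sum>g\<in>F1 \<union> F2. (if g \<in> F2 then c2 g else 0) * g p)" for p
  proof -
    have "(\<Sum>g\<in>F2. c2 g * g p) = (\<Sum>g\<in>F1 \<union> F2. if g \<in> F2 then c2 g * g p else 0)"
      using sum.inter_restrict[OF fin, of "\<lambda>g. c2 g * g p" F2] by (simp add: Int_absorb2)
    also have "\<dots> = (\<Sum>g\<in>F1 \<union> F2. (if g \<in> F2 then c2 g else 0) * g p)"
      by (rule sum.cong) auto
    finally show ?thesis .
  qed
  have "(\<lambda>p. u p + v p) = (\<lambda>p. \<Sum>g\<in>F1 \<union> F2. c g * g p)"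
    unfolding 1(3) 2(3) e1 e2 c_def by (simp add: sum.distrib[symmetric] distrib_right)
  moreover have "F1 \<union> F2 \<subseteq> G" using 1(2) 2(2) by blast
  ultimately show ?thesis unfolding span_fn_def
    by (intro CollectI exI[of _ "F1 \<union> F2"] exI[of _ c] conjI fin)
qed

lemma span_smult:
  assumes "u \<in> span_fn G"
  shows "(\<lambda>p. c * u p) \<in> span_fn G"
proof -
  obtain F1 c1 where 1: "finite F1" "F1 \<subseteq> G" "u = (\<lambda>p. \<Sum>g\<in>F1. c1 g * g p)"
    using assms(1) unfolding span_fn_def by blast
  have "(\<lambda>p. c * u p) = (\<lambda>p. \<Sum>g\<in>F1. (c * c1 g) * g p)"
    unfolding 1(3) by (simp add: sum_distrib_left mult.assoc)
  then show ?thesis unfolding span_fn_def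
    by (intro CollectI exI[of _ F1] exI[of _ "\<lambda>g. c * c1 g"] conjI 1(1) 1(2))
qed

lemma dsum_zero: "fzero \<in> dsum_sp I (\<lambda>i. span_fn (G i))"
  unfolding dsum_sp_def using span_zero by (auto simp: fzero_def)

lemma dsum_add:
  assumes "F \<in> dsum_sp I (\<lambda>i. span_fn (G i))" "H \<in> dsum_sp I (\<lambda>i. span_fn (G i))"
  shows "(\<lambda>p. F p + H p) \<in> dsum_sp I (\<lambda>i. span_fn (G i))"
proof -
  have "{i. \<exists>r. F (i, r) + H (i, r) \<noteq> 0} \<subseteq> {i. \<exists>r. F (i, r) \<noteq> 0} \<union> {i. \<exists>r. H (i, r) \<noteq> 0}"
    by auto
  then have fin: "finite {i. \<exists>r. F (i, r) + H (i, r) \<noteq> 0}"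
    using assms unfolding dsum_sp_def by (auto intro: finite_subset)
  have "(\<lambda>r. F (i, r) + H (i, r)) \<in> (if i \<in> I then span_fn (G i) else {fzero})" for i
  proof (cases "i \<in> I")
    case True
    have A: "(\<lambda>r. F (i, r)) \<in> (if i \<in> I then span_fn (G i) else {fzero})"
      "(\<lambda>r. H (i, r)) \<in> (if i \<in> I then span_fn (G i) else {fzero})"
      using assms unfolding dsum_sp_def by blast+
    then show ?thesis using True span_add[of "\<lambda>r. F (i, r)" "G i" "\<lambda>r. H (i, r)"] by simp
  next
    case False
    have A: "(\<lambda>r. F (i, r)) \<in> (if i \<in> I then span_fn (G i) else {fzero})"
      "(\<lambda>r. H (i, r)) \<in> (if i \<in> I then span_fn (G i) else {fzero})"
      using assms unfolding dsum_sp_def by blast+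
    then have "(\<lambda>r. F (i, r)) = fzero" "(\<lambda>r. H (i, r)) = fzero" using False by simp_all
    then show ?thesis using False by (auto simp: fzero_def fun_eq_iff)
  qed
  then show ?thesis using fin unfolding dsum_sp_def by auto
qed

lemma dsum_smult:
  assumes "F \<in> dsum_sp I (\<lambda>i. span_fn (G i))"
  shows "(\<lambda>p. c * F p) \<in> dsum_sp I (\<lambda>i. span_fn (G i))"
proof -
  have "{i. \<exists>r. c * F (i, r) \<noteq> 0} \<subseteq> {i. \<exists>r. F (i, r) \<noteq> 0}"
    by auto
  then have fin: "finite {i. \<exists>r. c * F (i, r) \<noteq> 0}"
    using assms unfolding dsum_sp_def by (auto intro: finite_subset)
  have "(\<lambda>r. c * F (i, r)) \<in> (if i \<in> I then span_fn (G i) else {fzero})" for i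
  proof (cases "i \<in> I")
    case True
    have A: "(\<lambda>r. F (i, r)) \<in> (if i \<in> I then span_fn (G i) else {fzero})"
      using assms unfolding dsum_sp_def by blast
    then show ?thesis using True span_smult[of "\<lambda>r. F (i, r)" "G i" c] by simp
  next
    case False
    have A: "(\<lambda>r. F (i, r)) \<in> (if i \<in> I then span_fn (G i) else {fzero})"
      using assms unfolding dsum_sp_def by blast
    then have "(\<lambda>r. F (i, r)) = fzero" using False by simp
    then show ?thesis using False by (auto simp: fzero_def fun_eq_iff)
  qed
  then show ?thesis using fin unfolding dsum_sp_def by auto
qed

lemma lin_zero:
  assumes "linear_on D T psi" "fzero \<in> D"
  shows "psi fzero = fzero"
proof -
  have "psi (\<lambda>p. 0 * fzero p) = (\<lambda>q. 0 * psi fzero q)"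
    using assms unfolding linear_on_def by blast
  then show ?thesis by (simp add: fzero_def)
qed

lemma lin_sum_zero:
  assumes lin: "linear_on D T psi" and z: "fzero \<in> D"
    and add: "\<forall>u\<in>D. \<forall>v\<in>D. (\<lambda>p. u p + v p) \<in> D"
    and sm: "\<forall>c. \<forall>v\<in>D. (\<lambda>p. c * v p) \<in> D"
    and fin: "finite G" and h: "\<forall>g\<in>G. h g \<in> D \<and> psi (h g) = fzero"
  shows "(\<lambda>p. \<Sum>g\<in>G. c g * h g p) \<in> D \<and> psi (\<lambda>p. \<Sum>g\<in>G. c g * h g p) = fzero"
  using fin h
proof (induction G rule: finite_induct)
  case empty
  then show ?case using z lin_zero[OF lin z] by (simp add: fzero_def)
next
  case (insert x G)
  let ?S = "\<lambda>p. \<Sum>g\<in>G. c g * h g p"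
  have S: "?S \<in> D" "psi ?S = fzero" using insert by auto
  have hx: "h x \<in> D" "psi (h x) = fzero" using insert by auto
  have cx: "(\<lambda>p. c x * h x p) \<in> D" using sm hx by blast
  have eq: "(\<lambda>p. \<Sum>g\<in>insert x G. c g * h g p) = (\<lambda>p. (\<lambda>p. c x * h x p) p + ?S p)"
    using insert by simp
  have "psi (\<lambda>p. (\<lambda>p. c x * h x p) p + ?S p) = (\<lambda>q. psi (\<lambda>p. c x * h x p) q + psi ?S q)"
  proof -
    have L: "\<forall>u\<in>D. \<forall>v\<in>D. psi (\<lambda>p. u p + v p) = (\<lambda>q. psi u q + psi v q)"
      using lin unfolding linear_on_def by blast
    show ?thesis using bspec[OF bspec[OF L cx] S(1)] by simp
  qed
  also have "psi (\<lambda>p. c x * h x p) = (\<lambda>q. c x * psi (h x) q)"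
  proof -
    have L: "\<forall>c. \<forall>v\<in>D. psi (\<lambda>p. c * v p) = (\<lambda>q. c * psi v q)"
      using lin unfolding linear_on_def by blast
    show ?thesis using bspec[OF spec[OF L, of "c x"] hx(1)] by simp
  qed
  finally show ?case unfolding eq using hx S add cx by (auto simp: fzero_def)
qed



lemma span_gen: "g \<in> G \<Longrightarrow> g \<in> span_fn G"
  unfolding span_fn_def
  by (rule CollectI, rule exI[of _ "{g}"], rule exI[of _ "\<lambda>_. 1"]) auto

lemma dsum_inj_mem:
  assumes "i \<in> I" "u \<in> span_fn (G i)"
  shows "dsum_inj i u \<in> dsum_sp I (\<lambda>i. span_fn (G i))"
proof -
  have "{j. \<exists>r. dsum_inj i u (j, r) \<noteq> 0} \<subseteq> {i}" by (auto simp: dsum_inj_def)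
  then have "finite {j. \<exists>r. dsum_inj i u (j, r) \<noteq> 0}" by (rule finite_subset) simp
  moreover have "(\<lambda>r. dsum_inj i u (j, r)) \<in> (if j \<in> I then span_fn (G j) else {fzero})" for j
  proof (cases "j = i")
    case True then show ?thesis using assms by (simp add: dsum_inj_def)
  next
    case False
    then have "(\<lambda>r. dsum_inj i u (j, r)) = fzero" by (simp add: dsum_inj_def fzero_def)
    then show ?thesis by (simp add: span_zero)
  qed
  ultimately show ?thesis unfolding dsum_sp_def by blast
qed

lemma decomp:
  assumes lin: "linear_on (dsum_sp I (\<lambda>i. span_fn (G i))) T psi"
    and h: "\<forall>i\<in>I. \<forall>g\<in>G i. psi (dsum_inj i g) = fzero"
    and F: "F \<in> dsum_sp I (\<lambda>i. span_fn (G i))"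
  shows "psi F = fzero"
proof -
  let ?D = "dsum_sp I (\<lambda>i. span_fn (G i))"
  have z: "fzero \<in> ?D" by (rule dsum_zero)
  have add: "\<forall>u\<in>?D. \<forall>v\<in>?D. (\<lambda>p. u p + v p) \<in> ?D" using dsum_add by blast
  have sm: "\<forall>c. \<forall>v\<in>?D. (\<lambda>p. c * v p) \<in> ?D" using dsum_smult by blast
  have inner: "dsum_inj i u \<in> ?D \<and> psi (dsum_inj i u) = fzero" if i: "i \<in> I" and u: "u \<in> span_fn (G i)" for i u
  proof -
    obtain E c where E: "finite E" "E \<subseteq> G i" "u = (\<lambda>p. \<Sum>g\<in>E. c g * g p)"
      using u unfolding span_fn_def by blast
    have eq: "dsum_inj i u = (\<lambda>p. \<Sum>g\<in>E. c g * dsum_inj i g p)"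
      unfolding E(3) dsum_inj_def by (auto simp: fun_eq_iff)
    have "\<forall>g\<in>E. dsum_inj i g \<in> ?D \<and> psi (dsum_inj i g) = fzero"
      using E(2) h i dsum_inj_mem[OF i span_gen] by blast
    from lin_sum_zero[OF lin z add sm E(1) this, of c] show ?thesis unfolding eq by blast
  qed
  define S where "S = {i. \<exists>r. F (i, r) \<noteq> 0}"
  have finS: "finite S" using F unfolding S_def dsum_sp_def by blast
  have comp: "(\<lambda>r. F (i, r)) \<in> (if i \<in> I then span_fn (G i) else {fzero})" for i
    using F unfolding dsum_sp_def by blast
  have SI: "S \<subseteq> I"
  proof
    fix i assume "i \<in> S"
    then obtain r where "F (i, r) \<noteq> 0" unfolding S_def by blast
    then show "i \<in> I" using comp[of i] by (auto simp: fzero_def fun_eq_iff split: if_splits)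
  qed
  have eq: "F = (\<lambda>p. \<Sum>i\<in>S. 1 * dsum_inj i (\<lambda>r. F (i, r)) p)"
  proof (rule ext)
    fix p :: "'a \<times> 'b"
    obtain j r where p: "p = (j, r)" by (cases p)
    have "(\<Sum>i\<in>S. 1 * dsum_inj i (\<lambda>r. F (i, r)) (j, r)) = (\<Sum>i\<in>S. if j = i then F (i, r) else 0)"
      by (simp add: dsum_inj_def)
    also have "\<dots> = (if j \<in> S then F (j, r) else 0)"
      using finS by (simp add: sum.delta)
    also have "\<dots> = F (j, r)" unfolding S_def by auto
    finally show "F p = (\<Sum>i\<in>S. 1 * dsum_inj i (\<lambda>r. F (i, r)) p)" unfolding p by simp
  qed
  have "\<forall>i\<in>S. dsum_inj i (\<lambda>r. F (i, r)) \<in> ?D \<and> psi (dsum_inj i (\<lambda>r. F (i, r))) = fzero"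
    using inner SI comp by (metis subsetD)
  from lin_sum_zero[OF lin z add sm finS this, of "\<lambda>_. 1"] show ?thesis
    using eq by simp
qed



lemma pure_mem:
  assumes "i \<in> I" "v \<in> V i a" "w \<in> W i b"
  shows "dsum_inj i (tens v w) \<in> dsum_sp I (\<lambda>i. tensor_sp (V i a) (W i b))"
  unfolding tensor_sp_def
  by (rule dsum_inj_mem[OF assms(1)], rule span_gen) (use assms in blast)

lemma tdsum_zero: "fzero \<in> dsum_sp I (\<lambda>i. tensor_sp (V i a) (W i b))"
  unfolding tensor_sp_def by (rule dsum_zero)

lemma tdsum_smult: "F \<in> dsum_sp I (\<lambda>i. tensor_sp (V i a) (W i b))
  \<Longrightarrow> (\<lambda>p. c * F p) \<in> dsum_sp I (\<lambda>i. tensor_sp (V i a) (W i b))"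
  unfolding tensor_sp_def by (rule dsum_smult)

lemma exists_pure:
  assumes lin: "linear_on (dsum_sp I (\<lambda>i. tensor_sp (V i a) (W i b))) T psi"
    and sur: "psi ` dsum_sp I (\<lambda>i. tensor_sp (V i a) (W i b)) = T"
    and e: "e \<in> T" "e \<noteq> fzero"
  shows "\<exists>i\<in>I. \<exists>v\<in>V i a. \<exists>w\<in>W i b. psi (dsum_inj i (tens v w)) \<noteq> fzero"
proof (rule ccontr)
  assume "\<not> ?thesis"
  then have h: "\<forall>i\<in>I. \<forall>g\<in>{tens v w | v w. v \<in> V i a \<and> w \<in> W i b}. psi (dsum_inj i g) = fzero"
    by blast
  obtain F where F: "F \<in> dsum_sp I (\<lambda>i. tensor_sp (V i a) (W i b))" "e = psi F"
    using sur e by blast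
  have "psi F = fzero"
    using decomp[of I "\<lambda>i. {tens v w | v w. v \<in> V i a \<and> w \<in> W i b}" T psi F] lin h F(1)
    unfolding tensor_sp_def by blast
  then show False using F e by simp
qed

lemma FI_act_mem:
  assumes "FI_module V act" "fi_mor a a' f" "v \<in> V a"
  shows "act a a' f v \<in> V a'"
proof -
  have "linear_on (V a) (V a') (act a a' f)" using assms(1,2) unfolding FI_module_def by blast
  then show ?thesis using assms(3) unfolding linear_on_def by blast
qed

lemma fi_id_le: "a \<le> a' \<Longrightarrow> fi_mor a a' id"
  unfolding fi_mor_def by auto

lemma not_iso:
  fixes I :: "'i set"
    and V :: "'i \<Rightarrow> nat \<Rightarrow> ('x \<Rightarrow> 'k::field) set"
    and actV :: "'i \<Rightarrow> nat \<Rightarrow> nat \<Rightarrow> (nat \<Rightarrow> nat) \<Rightarrow> ('x \<Rightarrow> 'k) \<Rightarrow> ('x \<Rightarrow> 'k)"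
    and W :: "'i \<Rightarrow> nat \<Rightarrow> ('y \<Rightarrow> 'k) set"
    and actW :: "'i \<Rightarrow> nat \<Rightarrow> nat \<Rightarrow> (nat \<Rightarrow> nat) \<Rightarrow> ('y \<Rightarrow> 'k) \<Rightarrow> ('y \<Rightarrow> 'k)"
  assumes FI: "\<forall>i\<in>I. FI_module (V i) (actV i) \<and> FI_module (W i) (actW i)"
  shows "\<not> FI2_iso_dsum_boxtimes (M7_sp :: nat \<Rightarrow> nat \<Rightarrow> (unit \<Rightarrow> 'k) set) M7_act I V actV W actW"
proof
  assume "FI2_iso_dsum_boxtimes (M7_sp :: nat \<Rightarrow> nat \<Rightarrow> (unit \<Rightarrow> 'k) set) M7_act I V actV W actW"
  then obtain psi :: "nat \<Rightarrow> nat \<Rightarrow> ('i \<times> ('x \<times> 'y) \<Rightarrow> 'k) \<Rightarrow> (unit \<Rightarrow> 'k)" where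
    LB: "\<forall>a b. linear_on (dsum_sp I (\<lambda>i. tensor_sp (V i a) (W i b))) (M7_sp a b) (psi a b)
          \<and> bij_betw (psi a b) (dsum_sp I (\<lambda>i. tensor_sp (V i a) (W i b))) (M7_sp a b)"
    and NN: "\<forall>a b a' b' f g i v w. fi_mor a a' f \<and> fi_mor b b' g \<and> i \<in> I
          \<and> v \<in> V i a \<and> w \<in> W i b \<longrightarrow>
          M7_act a b a' b' f g (psi a b (dsum_inj i (tens v w)))
          = psi a' b' (dsum_inj i (tens (actV i a a' f v) (actW i b b' g w)))"
    unfolding FI2_iso_dsum_boxtimes_def by blast
  have L: "\<And>a b. linear_on (dsum_sp I (\<lambda>i. tensor_sp (V i a) (W i b))) (M7_sp a b) (psi a b)"
    using LB by blast
  have B: "\<And>a b. bij_betw (psi a b) (dsum_sp I (\<lambda>i. tensor_sp (V i a) (W i b))) (M7_sp a b)"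
    using LB by blast
  have N: "\<And>a b a' b' f g i v w. fi_mor a a' f \<Longrightarrow> fi_mor b b' g \<Longrightarrow> i \<in> I
          \<Longrightarrow> v \<in> V i a \<Longrightarrow> w \<in> W i b \<Longrightarrow>
          M7_act a b a' b' f g (psi a b (dsum_inj i (tens v w)))
          = psi a' b' (dsum_inj i (tens (actV i a a' f v) (actW i b b' g w)))"
    using NN by blast
  let ?D = "\<lambda>a b. dsum_sp I (\<lambda>i. tensor_sp (V i a) (W i b))"
  have z: "psi a b fzero = fzero" for a b using lin_zero[OF L[of a b] tdsum_zero[of I V a W b]] .
  have one: "(\<lambda>_::unit. 1::'k) \<noteq> fzero" by (auto simp: fzero_def fun_eq_iff)
  have M20: "(M7_sp 2 0 :: (unit \<Rightarrow> 'k) set) = UNIV" "(M7_sp 0 2 :: (unit \<Rightarrow> 'k) set) = UNIV"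
    "(M7_sp 2 2 :: (unit \<Rightarrow> 'k) set) = UNIV" "(M7_sp 0 0 :: (unit \<Rightarrow> 'k) set) = {fzero}"
    by (auto simp: M7_sp_def)
  obtain i v w where i: "i \<in> I" "v \<in> V i 2" "w \<in> W i 0"
    and e1: "psi 2 0 (dsum_inj i (tens v w)) \<noteq> fzero"
    using exists_pure[where I=I and V=V and a=2 and W=W and b=0 and psi="psi 2 0" and T="M7_sp 2 0" and e="\<lambda>_. 1", OF L[of 2 0] bij_betw_imp_surj_on[OF B[of 2 0]]] one M20 by blast
  obtain j v' w' where j: "j \<in> I" "v' \<in> V j 0" "w' \<in> W j 2"
    and e2: "psi 0 2 (dsum_inj j (tens v' w')) \<noteq> fzero"
    using exists_pure[where I=I and V=V and a=0 and W=W and b=2 and psi="psi 0 2" and T="M7_sp 0 2" and e="\<lambda>_. 1", OF L[of 0 2] bij_betw_imp_surj_on[OF B[of 0 2]]] one M20 by blast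
  have f22: "fi_mor 2 2 id" and f02: "fi_mor 0 2 id" by (auto intro: fi_id_le)
  define x1 where "x1 = dsum_inj i (tens (actV i 2 2 id v) (actW i 0 2 id w))"
  define x2 where "x2 = dsum_inj j (tens (actV j 0 2 id v') (actW j 2 2 id w'))"
  have x1eq: "psi 2 2 x1 = psi 2 0 (dsum_inj i (tens v w))"
    using N[OF f22 f02 i] unfolding x1_def M7_act_def by simp
  have x2eq: "psi 2 2 x2 = psi 0 2 (dsum_inj j (tens v' w'))"
    using N[OF f02 f22 j] unfolding x2_def M7_act_def by simp
  have FIi: "FI_module (V i) (actV i)" "FI_module (W i) (actW i)" using FI i(1) by auto
  have FIj: "FI_module (V j) (actV j)" "FI_module (W j) (actW j)" using FI j(1) by auto
  have "actV i 2 2 id v \<in> V i 2" by (rule FI_act_mem[OF FIi(1) f22 i(2)])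
  moreover have "actW i 0 2 id w \<in> W i 2" by (rule FI_act_mem[OF FIi(2) f02 i(3)])
  ultimately have x1D: "x1 \<in> ?D 2 2" unfolding x1_def by (rule pure_mem[OF i(1)])
  have "actV j 0 2 id v' \<in> V j 2" by (rule FI_act_mem[OF FIj(1) f02 j(2)])
  moreover have "actW j 2 2 id w' \<in> W j 2" by (rule FI_act_mem[OF FIj(2) f22 j(3)])
  ultimately have x2D: "x2 \<in> ?D 2 2" unfolding x2_def by (rule pure_mem[OF j(1)])
  have ij: "i \<noteq> j"
  proof
    assume ij: "i = j"
    have "dsum_inj i (tens v w) \<noteq> fzero" using e1 z by metis
    then obtain q where q: "w q \<noteq> 0"
      by (auto simp: fun_eq_iff dsum_inj_def tens_def fzero_def split: if_splits)
    have "dsum_inj j (tens v' w') \<noteq> fzero" using e2 z by metis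
    then obtain p' where p': "v' p' \<noteq> 0"
      by (auto simp: fun_eq_iff dsum_inj_def tens_def fzero_def split: if_splits)
    define y where "y = dsum_inj i (tens v' w)"
    have v'i: "v' \<in> V i 0" using j(2) ij by simp
    have yD: "y \<in> ?D 0 0" unfolding y_def by (rule pure_mem[where V=V and W=W, OF i(1) v'i i(3)])
    have "y (i, (p', q)) \<noteq> 0" using p' q by (simp add: y_def dsum_inj_def tens_def)
    then have yz: "y \<noteq> fzero" by (auto simp: fzero_def)
    have "\<forall>v\<in>?D 0 0. psi 0 0 v \<in> M7_sp 0 0" using L[of 0 0] unfolding linear_on_def by blast
    then have "psi 0 0 y \<in> M7_sp 0 0" using yD by blast
    then have "psi 0 0 y = psi 0 0 fzero" using z M20 by simp
    moreover have inj: "inj_on (psi 0 0) (?D 0 0)" using B[of 0 0] unfolding bij_betw_def by blast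
    ultimately have "y = fzero" using inj_onD[OF inj _ yD tdsum_zero[of I V 0 W 0]] by blast
    then show False using yz by simp
  qed
  have ne1: "psi 2 2 x1 \<noteq> fzero" using x1eq e1 by simp
  have ne2: "psi 2 2 x2 \<noteq> fzero" using x2eq e2 by simp
  have u2: "psi 2 2 x2 () \<noteq> 0"
    using ne2 unfolding fzero_def by (metis (full_types) ext old.unit.exhaust)
  define c where "c = psi 2 2 x1 () / psi 2 2 x2 ()"
  have cx2D: "(\<lambda>p. c * x2 p) \<in> ?D 2 2" using tdsum_smult[where V=V and W=W and a=2 and b=2, OF x2D] .
  have "\<forall>c. \<forall>v\<in>?D 2 2. psi 2 2 (\<lambda>p. c * v p) = (\<lambda>q. c * psi 2 2 v q)"
    using L[of 2 2] unfolding linear_on_def by blast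
  then have "psi 2 2 (\<lambda>p. c * x2 p) = (\<lambda>q. c * psi 2 2 x2 q)"
    using x2D by blast
  also have "\<dots> = psi 2 2 x1" using u2 unfolding c_def by (auto simp: fun_eq_iff)
  finally have "psi 2 2 x1 = psi 2 2 (\<lambda>p. c * x2 p)" by (rule sym)
  moreover have inj: "inj_on (psi 2 2) (?D 2 2)" using B[of 2 2] unfolding bij_betw_def by blast
  ultimately have xeq: "x1 = (\<lambda>p. c * x2 p)"
    using inj_onD[OF inj _ x1D cx2D] by blast
  have "x1 = fzero"
  proof (rule ext)
    fix p :: "'i \<times> ('x \<times> 'y)"
    obtain k r where p: "p = (k, r)" by (cases p)
    have k: "x1 (k, r) = c * x2 (k, r)" using xeq by (rule fun_cong)
    show "x1 p = fzero p"
    proof (cases "k = i")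
      case True
      then have "x2 (k, r) = 0" using ij by (simp add: x2_def dsum_inj_def)
      then show ?thesis using k p by (simp add: fzero_def)
    next
      case False
      then show ?thesis using p by (simp add: x1_def dsum_inj_def fzero_def)
    qed
  qed
  then show False using ne1 z by simp
qed

theorem mainTheorem7:
  fixes I :: "'i set"
    and V :: "'i \<Rightarrow> nat \<Rightarrow> ('x \<Rightarrow> 'k::field) set"
    and actV :: "'i \<Rightarrow> nat \<Rightarrow> nat \<Rightarrow> (nat \<Rightarrow> nat) \<Rightarrow> ('x \<Rightarrow> 'k) \<Rightarrow> ('x \<Rightarrow> 'k)"
    and W :: "'i \<Rightarrow> nat \<Rightarrow> ('y \<Rightarrow> 'k) set"
    and actW :: "'i \<Rightarrow> nat \<Rightarrow> nat \<Rightarrow> (nat \<Rightarrow> nat) \<Rightarrow> ('y \<Rightarrow> 'k) \<Rightarrow> ('y \<Rightarrow> 'k)"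
  shows "FI2_module (M7_sp :: nat \<Rightarrow> nat \<Rightarrow> (unit \<Rightarrow> 'k) set) M7_act
    \<and> FI2_indecomposable (M7_sp :: nat \<Rightarrow> nat \<Rightarrow> (unit \<Rightarrow> 'k) set) M7_act
    \<and> ((\<forall>i\<in>I. FI_module (V i) (actV i) \<and> FI_module (W i) (actW i))
        \<longrightarrow> \<not> FI2_iso_dsum_boxtimes (M7_sp :: nat \<Rightarrow> nat \<Rightarrow> (unit \<Rightarrow> 'k) set) M7_act I V actV W actW)"
  apply (intro conjI impI)
    apply (rule M7_module)
   apply (rule M7_indec)
  apply (erule not_iso)
  done

end
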